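(* For $i=1,\cdots,r$ let $\Theta_i\in H^\infty_{M_{n\times m_i}}$ be matrix inner functions, and let $\Theta\in H^\infty_{M_{n\times l}}$ be a greatest common divisor of $\{\Theta_1,\cdots,\Theta_r\}$, i.e. a matrix inner function with $\bigvee_{i=1}^r\Theta_iH^2_{\mathbb C^{m_i}}=\Theta H^2_{\mathbb C^l}$ (closed linear span). Then $\max\{m_1,\cdots,m_r\}\le l\le\sum_{i=1}^rm_i$.
   Context: A matrix function $\Theta\in H^\infty_{M_{n\times m}}$ is inner if $\Theta(\zeta)^*\Theta(\zeta)=I$ for a.e. $\zeta$ on the unit circle; $H^2_{\mathbb C^m}$ is the space of column vectors of $m$ functions in the Hardy space $H^2$. *)

theory Defs
  imports "HOL-Analysis.Analysis"
begin

(* The unit circle is parametrised by t in [0, 2*pi] (zeta = exp(i t)) with Lebesgue measure.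
   Vector-valued functions are  nat => real => complex  (component index first);
   a vector in C^n uses components i < n and is zero in components i >= n.
   Matrix functions are  nat => nat => real => complex  (row, column), entries used for i<n, j<m. *)

definition is_L2 :: "(real \<Rightarrow> complex) \<Rightarrow> bool" where
  "is_L2 f \<longleftrightarrow> f \<in> borel_measurable lborel \<and>
     set_integrable lborel {0..2*pi} (\<lambda>t. (cmod (f t))^2)"

text \<open>Scalar Hardy space H^2: L^2 functions on the circle whose Fourier coefficients
  of negative index vanish.\<close>
definition is_H2 :: "(real \<Rightarrow> complex) \<Rightarrow> bool" where
  "is_H2 f \<longleftrightarrow> is_L2 f \<and>
     (\<forall>k::nat. k > 0 \<longrightarrow>
        (LINT t:{0..2*pi}|lborel. f t * exp (\<i> * of_nat k * of_real t)) = 0)"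

definition is_Hinf :: "(real \<Rightarrow> complex) \<Rightarrow> bool" where
  "is_Hinf f \<longleftrightarrow> is_H2 f \<and>
     (\<exists>B. AE t in lborel. t \<in> {0..2*pi} \<longrightarrow> cmod (f t) \<le> B)"

definition is_inner :: "nat \<Rightarrow> nat \<Rightarrow> (nat \<Rightarrow> nat \<Rightarrow> real \<Rightarrow> complex) \<Rightarrow> bool" where
  "is_inner n m \<Theta> \<longleftrightarrow> (\<forall>i<n. \<forall>j<m. is_Hinf (\<Theta> i j)) \<and>
     (AE t in lborel. t \<in> {0..2*pi} \<longrightarrow>
        (\<forall>j<m. \<forall>k<m. (\<Sum>i<n. cnj (\<Theta> i j t) * \<Theta> i k t) = (if j = k then 1 else 0)))"

definition vec_L2 :: "nat \<Rightarrow> (nat \<Rightarrow> real \<Rightarrow> complex) \<Rightarrow> bool" where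
  "vec_L2 n f \<longleftrightarrow> (\<forall>i<n. is_L2 (f i)) \<and> (\<forall>i\<ge>n. f i = (\<lambda>_. 0))"

definition vec_H2 :: "nat \<Rightarrow> (nat \<Rightarrow> real \<Rightarrow> complex) \<Rightarrow> bool" where
  "vec_H2 m f \<longleftrightarrow> (\<forall>j<m. is_H2 (f j)) \<and> (\<forall>j\<ge>m. f j = (\<lambda>_. 0))"

definition mat_apply :: "nat \<Rightarrow> nat \<Rightarrow> (nat \<Rightarrow> nat \<Rightarrow> real \<Rightarrow> complex) \<Rightarrow>
    (nat \<Rightarrow> real \<Rightarrow> complex) \<Rightarrow> (nat \<Rightarrow> real \<Rightarrow> complex)" where
  "mat_apply n m \<Theta> f = (\<lambda>i t. if i < n then (\<Sum>j<m. \<Theta> i j t * f j t) else 0)"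

definition l2dist :: "nat \<Rightarrow> (nat \<Rightarrow> real \<Rightarrow> complex) \<Rightarrow> (nat \<Rightarrow> real \<Rightarrow> complex) \<Rightarrow> real" where
  "l2dist n g h = sqrt (\<Sum>i<n. LINT t:{0..2*pi}|lborel. (cmod (g i t - h i t))^2)"

text \<open>Theta H^2_{C^m}, as a subset of L^2_{C^n} (functions identified a.e.).\<close>
definition range_mult :: "nat \<Rightarrow> nat \<Rightarrow> (nat \<Rightarrow> nat \<Rightarrow> real \<Rightarrow> complex) \<Rightarrow>
    (nat \<Rightarrow> real \<Rightarrow> complex) set" where
  "range_mult n m \<Theta> = {g. vec_L2 n g \<and> (\<exists>f. vec_H2 m f \<and> l2dist n g (mat_apply n m \<Theta> f) = 0)}"

definition lin_span :: "(nat \<Rightarrow> real \<Rightarrow> complex) set \<Rightarrow> (nat \<Rightarrow> real \<Rightarrow> complex) set" where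
  "lin_span S = {g. \<exists>N (c :: nat \<Rightarrow> complex) v. (\<forall>k<N. v k \<in> S) \<and>
                     g = (\<lambda>i t. \<Sum>k<N. c k * v k i t)}"

definition l2_closure :: "nat \<Rightarrow> (nat \<Rightarrow> real \<Rightarrow> complex) set \<Rightarrow> (nat \<Rightarrow> real \<Rightarrow> complex) set" where
  "l2_closure n S = {g. vec_L2 n g \<and> (\<forall>\<epsilon>>0. \<exists>h\<in>S. l2dist n g h < \<epsilon>)}"

end

theory Submission
  imports Defs "HOL-Library.Function_Algebras"
begin

definition cscale :: "complex \<Rightarrow> (nat \<Rightarrow> complex) \<Rightarrow> (nat \<Rightarrow> complex)" where
  "cscale c f = (\<lambda>i. c * f i)"

interpretation CV: vector_space cscale
  by unfold_locales (auto simp: cscale_def fun_eq_iff algebra_simps)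

lemma cscale_sum_apply: "(\<Sum>x\<in>A. cscale (f x) (g x)) i = (\<Sum>x\<in>A. f x * g x i)"
  by (induction A rule: infinite_finite_induct) (auto simp: cscale_def)

lemma LA_indep:
  fixes u h :: "nat \<Rightarrow> nat \<Rightarrow> complex" and c :: "nat \<Rightarrow> complex"
  assumes orth: "\<forall>j<l. \<forall>k<l. (\<Sum>i<n. cnj (u j i) * u k i) = (if j = k then 1 else 0)"
    and close: "\<forall>k<l. \<forall>i<n. cmod (u k i - h k i) \<le> \<eta>"
    and small: "real l * real n * \<eta> < 1"
    and zero: "\<forall>i<n. (\<Sum>k<l. c k * h k i) = 0"
  shows "\<forall>k<l. c k = 0"
proof -
  have ub: "cmod (u j i) \<le> 1" if "j < l" "i < n" for j i
  proof -
    have "(\<Sum>i<n. cnj (u j i) * u j i) = 1" using orth that by auto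
    moreover have "(\<Sum>i<n. cnj (u j i) * u j i) = of_real (\<Sum>i<n. (cmod (u j i))^2)"
      unfolding of_real_sum by (intro sum.cong refl) (metis complex_norm_square mult.commute)
    ultimately have "complex_of_real (\<Sum>i<n. (cmod (u j i))^2) = 1" by metis
    hence "(\<Sum>i<n. (cmod (u j i))^2) = 1" using of_real_eq_1_iff by blast
    moreover have "(cmod (u j i))^2 \<le> (\<Sum>i<n. (cmod (u j i))^2)"
      using that by (intro member_le_sum) auto
    ultimately have "(cmod (u j i))^2 \<le> 1" by simp
    thus ?thesis by (simp add: power_le_one_iff abs_le_square_iff)  
  qed
  have eta0: "\<eta> \<ge> 0" if "l > 0" "n > 0" using close that by (meson norm_ge_zero order_trans)
  define e where "e j k = (\<Sum>i<n. cnj (u j i) * (u k i - h k i))" for j k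
  have ebd: "cmod (e j k) \<le> real n * \<eta>" if "j < l" "k < l" for j k
  proof -
    have "cmod (e j k) \<le> (\<Sum>i<n. cmod (cnj (u j i) * (u k i - h k i)))"
      unfolding e_def by (rule norm_sum)
    also have "\<dots> \<le> (\<Sum>i<n. \<eta>)"
    proof (rule sum_mono)
      fix i assume "i \<in> {..<n}"
      hence "cmod (u j i) \<le> 1" "cmod (u k i - h k i) \<le> \<eta>" using ub close that by auto
      thus "cmod (cnj (u j i) * (u k i - h k i)) \<le> \<eta>"
        by (simp add: norm_mult) (metis mult_le_one mult_right_mono norm_ge_zero order_trans mult_1)
    qed
    finally show ?thesis by simp
  qed
  have cj: "c j = (\<Sum>k<l. c k * e j k)" if "j < l" for j
  proof -
    have "0 = (\<Sum>i<n. cnj (u j i) * (\<Sum>k<l. c k * h k i))" using zero by simp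
    also have "\<dots> = (\<Sum>k<l. c k * (\<Sum>i<n. cnj (u j i) * h k i))"
      by (simp add: sum_distrib_left sum_distrib_right algebra_simps sum.swap[of _ "{..<n}"])
    also have "\<dots> = (\<Sum>k<l. c k * ((if j = k then 1 else 0) - e j k))"
    proof (rule sum.cong[OF refl])
      fix k assume "k \<in> {..<l}"
      hence "(\<Sum>i<n. cnj (u j i) * h k i) = (\<Sum>i<n. cnj (u j i) * u k i) - e j k"
        unfolding e_def by (simp add: algebra_simps sum_subtractf)
      thus "c k * (\<Sum>i<n. cnj (u j i) * h k i) = c k * ((if j = k then 1 else 0) - e j k)"
        using orth that \<open>k \<in> {..<l}\<close> by simp
    qed
    also have "\<dots> = (\<Sum>k<l. (if j = k then c k else 0) - c k * e j k)"
      by (rule sum.cong) (auto simp: algebra_simps)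
    also have "\<dots> = c j - (\<Sum>k<l. c k * e j k)"
      using that by (simp add: sum_subtractf sum.delta)
    finally show ?thesis by simp
  qed
  define C where "C = (\<Sum>k<l. cmod (c k))"
  have "C \<le> (\<Sum>j<l. real n * \<eta> * C)"
    unfolding C_def
  proof (rule sum_mono)
    fix j assume j: "j \<in> {..<l}"
    have "cmod (c j) \<le> (\<Sum>k<l. cmod (c k * e j k))" using cj[of j] j by (metis lessThan_iff norm_sum)
    also have "\<dots> \<le> (\<Sum>k<l. cmod (c k) * (real n * \<eta>))"
      using ebd j by (intro sum_mono) (simp add: norm_mult mult_left_mono)
    also have "\<dots> = real n * \<eta> * (\<Sum>k<l. cmod (c k))"
      by (simp add: sum_distrib_left mult_ac)
    finally show "cmod (c j) \<le> real n * \<eta> * (\<Sum>k<l. cmod (c k))" .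
  qed
  hence "C \<le> real l * real n * \<eta> * C" by simp
  hence "(1 - real l * real n * \<eta>) * C \<le> 0" by (simp add: algebra_simps)
  hence "C \<le> 0" using small by (simp add: mult_le_0_iff)
  moreover have "C \<ge> 0" unfolding C_def by (simp add: sum_nonneg)
  ultimately have "C = 0" by simp
  thus ?thesis unfolding C_def by (simp add: sum_nonneg_eq_0_iff)
qed

lemma LA_bound:
  fixes u h :: "nat \<Rightarrow> nat \<Rightarrow> complex"
  assumes orth: "\<forall>j<l. \<forall>k<l. (\<Sum>i<n. cnj (u j i) * u k i) = (if j = k then 1 else 0)"
    and close: "\<forall>k<l. \<forall>i<n. cmod (u k i - h k i) \<le> \<eta>"
    and small: "real l * real n * \<eta> < 1"
    and sp: "\<forall>k<l. h k \<in> CV.span B" and fin: "finite B"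
  shows "l \<le> card B"
proof -
  have Z: "\<forall>k<l. c k = 0" if "(\<Sum>k<l. cscale (c k) (h k)) = 0" for c
  proof (rule LA_indep[OF orth close small])
    show "\<forall>i<n. (\<Sum>k<l. c k * h k i) = 0"
      using that by (metis cscale_sum_apply zero_fun_def)
  qed
  have inj: "inj_on h {..<l}"
  proof (rule inj_onI, rule ccontr)
    fix a b assume ab: "a \<in> {..<l}" "b \<in> {..<l}" "h a = h b" "a \<noteq> b"
    define c where "c k = (if k = a then 1 else if k = b then -1 else (0::complex))" for k
    have "(\<Sum>k<l. cscale (c k) (h k)) = (\<Sum>k\<in>{a,b}. cscale (c k) (h k))"
      by (rule sum.mono_neutral_right) (use ab in \<open>auto simp: c_def cscale_def fun_eq_iff\<close>)
    also have "\<dots> = 0" using ab by (simp add: c_def cscale_def fun_eq_iff)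
    finally have "c a = 0" using Z ab by auto
    thus False by (simp add: c_def)
  qed
  have "CV.independent (h ` {..<l})"
  proof (rule CV.independent_if_scalars_zero)
    fix f x assume s: "(\<Sum>x\<in>h ` {..<l}. cscale (f x) x) = 0" and x: "x \<in> h ` {..<l}"
    have "(\<Sum>k<l. cscale (f (h k)) (h k)) = 0" using s by (simp add: sum.reindex[OF inj])
    hence "\<forall>k<l. f (h k) = 0" by (rule Z)
    thus "f x = 0" using x by auto
  qed auto
  moreover have "h ` {..<l} \<subseteq> CV.span B" using sp by auto
  ultimately have "card (h ` {..<l}) \<le> card B" using CV.independent_span_bound fin by blast
  thus ?thesis using card_image[OF inj] by simp
qed

abbreviation "II \<equiv> {0..2*pi}"

lemma set_integral_sum':
  fixes f :: "'k \<Rightarrow> 'a \<Rightarrow> real"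
  assumes "finite K" "\<forall>k\<in>K. set_integrable M A (f k)"
  shows "set_integrable M A (\<lambda>x. \<Sum>k\<in>K. f k x) \<and> (LINT x:A|M. (\<Sum>k\<in>K. f k x)) = (\<Sum>k\<in>K. LINT x:A|M. f k x)"
  using assms
proof (induction K rule: finite_induct)
  case empty
  then show ?case by (simp add: set_integrable_def)
next
  case (insert k K)
  then show ?case by (simp add: set_integral_add)
qed

lemma L2_meas: "is_L2 f \<Longrightarrow> f \<in> borel_measurable borel"
  by (metis is_L2_def measurable_lborel2)

lemma L2_int: "is_L2 f \<Longrightarrow> set_integrable lborel II (\<lambda>t. (cmod (f t))^2)"
  by (simp add: is_L2_def)

lemma sq_meas:
  assumes "f \<in> borel_measurable lborel"
  shows "set_borel_measurable lborel II (\<lambda>t. (cmod (f t))^2)"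
proof -
  have [measurable]: "f \<in> borel_measurable lborel" by fact
  show ?thesis unfolding set_borel_measurable_def by measurable
qed

lemma L2_add:
  assumes "is_L2 f" "is_L2 g"
  shows "is_L2 (\<lambda>t. f t + g t)"
proof -
  have m: "(\<lambda>t. f t + g t) \<in> borel_measurable lborel" using L2_meas[OF assms(1)] L2_meas[OF assms(2)] by auto
  have i: "set_integrable lborel II (\<lambda>t. 2 * (cmod (f t))^2 + 2 * (cmod (g t))^2)"
    using L2_int[OF assms(1)] L2_int[OF assms(2)] by (intro set_integral_add) auto
  have b: "norm ((cmod (f t + g t))^2) \<le> norm (2 * (cmod (f t))^2 + 2 * (cmod (g t))^2)" for t
  proof -
    have "cmod (f t + g t) \<le> cmod (f t) + cmod (g t)" by (rule norm_triangle_ineq)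
    hence "(cmod (f t + g t))^2 \<le> (cmod (f t) + cmod (g t))^2" by (simp add: power_mono)
    also have "\<dots> \<le> 2 * (cmod (f t))^2 + 2 * (cmod (g t))^2"
      using power2_sum[of "cmod (f t)" "cmod (g t)"] power2_diff[of "cmod (f t)" "cmod (g t)"]
        zero_le_power2[of "cmod (f t) - cmod (g t)"] by linarith
    finally show ?thesis by simp
  qed
  have "set_integrable lborel II (\<lambda>t. (cmod (f t + g t))^2)"
    by (rule set_integrable_bound[OF i sq_meas[OF m]]) (use b in auto)
  thus ?thesis using m by (simp add: is_L2_def)
qed

lemma L2_scale:
  assumes "is_L2 f"
  shows "is_L2 (\<lambda>t. c * f t)"
proof -
  have "set_integrable lborel II (\<lambda>t. (cmod c)^2 * (cmod (f t))^2)"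
    using L2_int[OF assms] by simp
  hence "set_integrable lborel II (\<lambda>t. (cmod (c * f t))^2)"
    by (simp add: norm_mult power_mult_distrib)
  moreover have "(\<lambda>t. c * f t) \<in> borel_measurable lborel" using L2_meas[OF assms] by auto
  ultimately show ?thesis by (simp add: is_L2_def)
qed

lemma L2_zero: "is_L2 (\<lambda>t. 0)"
  by (simp add: is_L2_def set_integrable_def)

lemma L2_sum:
  assumes "finite K" "\<forall>k\<in>K. is_L2 (f k)"
  shows "is_L2 (\<lambda>t. \<Sum>k\<in>K. f k t)"
  using assms by (induction K rule: finite_induct) (auto intro: L2_add L2_zero)

lemma L2_diff:
  assumes "is_L2 f" "is_L2 g"
  shows "is_L2 (\<lambda>t. f t - g t)"
  using L2_add[OF assms(1) L2_scale[OF assms(2), of "-1"]] by simp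

lemma L2_mult_bdd:
  assumes "is_Hinf a" "is_L2 f"
  shows "is_L2 (\<lambda>t. a t * f t)"
proof -
  obtain B where B: "AE t in lborel. t \<in> II \<longrightarrow> cmod (a t) \<le> B"
    using assms(1) by (auto simp: is_Hinf_def)
  have am: "a \<in> borel_measurable lborel" using assms(1) by (simp add: is_Hinf_def is_H2_def is_L2_def)
  have m: "(\<lambda>t. a t * f t) \<in> borel_measurable lborel" using am L2_meas[OF assms(2)] by simp
  have i: "set_integrable lborel II (\<lambda>t. B^2 * (cmod (f t))^2)"
    using L2_int[OF assms(2)] by simp
  have "set_integrable lborel II (\<lambda>t. (cmod (a t * f t))^2)"
  proof (rule set_integrable_bound[OF i sq_meas[OF m]])
    show "AE t in lborel. t \<in> II \<longrightarrow> norm ((cmod (a t * f t))^2) \<le> norm (B^2 * (cmod (f t))^2)"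
      using B
    proof eventually_elim
      case (elim t)
      show ?case
      proof
        assume "t \<in> II"
        hence "cmod (a t) \<le> B" using elim by auto
        hence "(cmod (a t))^2 \<le> B^2" by (simp add: power_mono)
        hence "(cmod (a t))^2 * (cmod (f t))^2 \<le> B^2 * (cmod (f t))^2" by (simp add: mult_right_mono)
        thus "norm ((cmod (a t * f t))^2) \<le> norm (B^2 * (cmod (f t))^2)"
          by (simp add: norm_mult power_mult_distrib)
      qed
    qed
  qed
  thus ?thesis using m by (simp add: is_L2_def)
qed

lemma Hinf_L2: "is_Hinf a \<Longrightarrow> is_L2 a"
  by (simp add: is_Hinf_def is_H2_def)

lemma l2dist_zero_AE:
  assumes "\<forall>i<n. is_L2 (g i)" "\<forall>i<n. is_L2 (h i)" "l2dist n g h = 0"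
  shows "AE t in lborel. t \<in> II \<longrightarrow> (\<forall>i<n. g i t = h i t)"
proof -
  have int: "set_integrable lborel II (\<lambda>t. (cmod (g i t - h i t))^2)" if "i < n" for i
    using L2_int[OF L2_diff] assms that by blast
  have nn: "(LINT t:II|lborel. (cmod (g i t - h i t))^2) \<ge> 0" for i
    unfolding set_lebesgue_integral_def by (intro integral_nonneg_AE) (auto simp: indicator_def)
  have "(\<Sum>i<n. LINT t:II|lborel. (cmod (g i t - h i t))^2) = 0"
    using assms(3) nn unfolding l2dist_def by (simp add: sum_nonneg)
  hence z: "(LINT t:II|lborel. (cmod (g i t - h i t))^2) = 0" if "i < n" for i
    using nn that by (simp add: sum_nonneg_eq_0_iff)
  have "AE t in lborel. t \<in> II \<longrightarrow> g i t = h i t" if "i < n" for i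
  proof -
    have "AE t in lborel. indicator II t *\<^sub>R (cmod (g i t - h i t))^2 = 0"
      using z[OF that] int[OF that]
      by (subst integral_nonneg_eq_0_iff_AE[symmetric]) (auto simp: set_integrable_def set_lebesgue_integral_def)
    thus ?thesis by eventually_elim (auto simp: indicator_def)
  qed
  hence "AE t in lborel. \<forall>i\<in>{..<n}. t \<in> II \<longrightarrow> g i t = h i t"
    by (intro AE_finite_allI) auto
  thus ?thesis by eventually_elim auto
qed

lemma exists_good:
  fixes S :: "real \<Rightarrow> real"
  assumes Q: "AE t in lborel. t \<in> II \<longrightarrow> Q t"
    and S: "set_integrable lborel II S"
    and lt: "(LINT t:II|lborel. S t) < 2 * pi * \<delta>"
  shows "\<exists>t\<in>II. Q t \<and> S t < \<delta>"
proof (rule ccontr)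
  assume neg: "\<not> ?thesis"
  from Q have "AE t in lborel. t \<in> II \<longrightarrow> \<delta> \<le> S t" by eventually_elim (use neg in \<open>auto simp: not_less\<close>)
  hence "(LINT t:II|lborel. \<delta>) \<le> (LINT t:II|lborel. S t)"
    using S by (intro set_integral_mono_AE) (auto simp: set_integrable_def)
  moreover have "(LINT t:II|lborel. \<delta>) = 2 * pi * \<delta>"
    by (subst set_integral_const) auto
  ultimately show False using lt by simp
qed

lemma exp_int_zero:
  assumes "k > (0::nat)"
  shows "(LINT t:II|lborel. exp (\<i> * of_nat k * of_real t)) = 0"
proof -
  have m: "(\<lambda>t::real. exp (\<i> * of_nat k * of_real t)) \<in> borel_measurable lborel" by measurable
  have si: "set_integrable lborel II (\<lambda>t::real. exp (\<i> * of_nat k * of_real t))"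
  proof (rule set_integrable_bound[where f = "\<lambda>_. 1::real"])
    show "set_integrable lborel II (\<lambda>_. 1::real)" by (simp add: set_integrable_def)
    show "set_borel_measurable lborel II (\<lambda>t::real. exp (\<i> * of_nat k * of_real t))"
      unfolding set_borel_measurable_def using m by measurable
    show "AE t in lborel. t \<in> II \<longrightarrow> norm (exp (\<i> * of_nat k * of_real t)) \<le> norm (1::real)"
      by (simp add: norm_exp_i_times[of "real k * t", simplified] mult.assoc)
  qed
  have "(LINT t:II|lborel. exp (\<i> * of_nat k * of_real t)) = integral II (\<lambda>t. exp ((\<i> * of_nat k) * of_real t))"
    using set_borel_integral_eq_integral(2)[OF si] by simp
  also have "\<dots> = (exp ((\<i> * of_nat k) * of_real (2*pi)) - 1) / (\<i> * of_nat k)"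
    using assms by (intro integral_exp) auto
  also have "exp ((\<i> * of_nat k) * of_real (2*pi)) = exp (\<i> * (of_real pi * 2)) ^ k"
    by (subst exp_of_nat_mult[symmetric]) (simp add: algebra_simps)
  also have "\<dots> = 1" by simp
  finally show ?thesis by simp
qed

lemma H2_one: "is_H2 (\<lambda>_. 1)"
  unfolding is_H2_def is_L2_def
  using exp_int_zero by (simp add: set_integrable_def)

lemma H2_zero: "is_H2 (\<lambda>_. 0)"
  unfolding is_H2_def using L2_zero by simp

definition colF :: "nat \<Rightarrow> (nat \<Rightarrow> nat \<Rightarrow> real \<Rightarrow> complex) \<Rightarrow> nat \<Rightarrow> nat \<Rightarrow> real \<Rightarrow> complex" where
  "colF n T j = (\<lambda>a t. if a < n then T a j t else 0)"

definition col :: "nat \<Rightarrow> (nat \<Rightarrow> nat \<Rightarrow> real \<Rightarrow> complex) \<Rightarrow> nat \<Rightarrow> real \<Rightarrow> nat \<Rightarrow> complex" where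
  "col n T j t = (\<lambda>a. if a < n then T a j t else 0)"

lemma l2dist_self: "l2dist n g g = 0"
  by (simp add: l2dist_def)

lemma colF_range:
  assumes "is_inner n m T" "j < m"
  shows "colF n T j \<in> range_mult n m T"
proof -
  define e where "e = (\<lambda>j' (t::real). if j' = j then 1 else (0::complex))"
  have "is_H2 (e j')" for j'
    by (cases "j' = j") (simp_all add: e_def H2_one H2_zero)
  moreover have "e j' = (\<lambda>_. 0)" if "j' \<ge> m" for j'
    using that assms(2) by (auto simp: e_def)
  ultimately have "vec_H2 m e" unfolding vec_H2_def by blast
  moreover have "mat_apply n m T e = colF n T j"
  proof (intro ext)
    fix a t
    have "(\<Sum>j'<m. T a j' t * e j' t) = (\<Sum>j'<m. if j' = j then T a j t else 0)"
      by (rule sum.cong) (auto simp: e_def)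
    also have "\<dots> = T a j t" using assms(2) by (subst sum.delta) auto
    finally show "mat_apply n m T e a t = colF n T j a t"
      by (simp add: mat_apply_def colF_def)
  qed
  moreover have "vec_L2 n (colF n T j)"
    using assms Hinf_L2 L2_zero unfolding vec_L2_def colF_def is_inner_def by auto
  ultimately show ?thesis unfolding range_mult_def
    by (intro CollectI conjI exI[of _ e]) (simp_all add: l2dist_self)
qed

lemma mat_apply_L2:
  assumes "is_inner n m T" "vec_H2 m f" "a < n"
  shows "is_L2 (mat_apply n m T f a)"
proof -
  have "mat_apply n m T f a = (\<lambda>t. \<Sum>j<m. T a j t * f j t)"
    using assms(3) by (simp add: mat_apply_def fun_eq_iff)
  moreover have "is_L2 (\<lambda>t. \<Sum>j<m. T a j t * f j t)"
  proof (intro L2_sum ballI)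
    fix j assume "j \<in> {..<m}"
    hence "is_Hinf (T a j)" "is_L2 (f j)" using assms unfolding is_inner_def vec_H2_def is_H2_def by auto
    thus "is_L2 (\<lambda>t. T a j t * f j t)" by (rule L2_mult_bdd)
  qed simp
  ultimately show ?thesis by simp
qed

lemma range_span:
  assumes "is_inner n m T" "v \<in> range_mult n m T"
  shows "AE t in lborel. t \<in> II \<longrightarrow> (\<lambda>a. v a t) \<in> CV.span ((\<lambda>j. col n T j t) ` {..<m})"
proof -
  obtain f where f: "vec_H2 m f" "l2dist n v (mat_apply n m T f) = 0" and vL: "vec_L2 n v"
    using assms(2) unfolding range_mult_def by auto
  have "AE t in lborel. t \<in> II \<longrightarrow> (\<forall>a<n. v a t = mat_apply n m T f a t)"
    by (rule l2dist_zero_AE[OF _ _ f(2)]) (use vL mat_apply_L2[OF assms(1) f(1)] in \<open>auto simp: vec_L2_def\<close>)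
  thus ?thesis
  proof eventually_elim
    case (elim t)
    show ?case
    proof
      assume "t \<in> II"
      hence eq: "\<forall>a<n. v a t = mat_apply n m T f a t" using elim by auto
      have "(\<lambda>a. v a t) = (\<Sum>j<m. cscale (f j t) (col n T j t))"
      proof
        fix a
        show "v a t = (\<Sum>j<m. cscale (f j t) (col n T j t)) a"
          using eq vL unfolding cscale_sum_apply
          by (cases "a < n") (auto simp: mat_apply_def col_def vec_L2_def mult.commute)
      qed
      also have "\<dots> \<in> CV.span ((\<lambda>j. col n T j t) ` {..<m})"
        by (intro CV.span_sum CV.span_scale CV.span_base) auto
      finally show "(\<lambda>a. v a t) \<in> CV.span ((\<lambda>j. col n T j t) ` {..<m})" .
    qed
  qed
qed

lemma span_AE:
  fixes r :: nat and ms :: "nat \<Rightarrow> nat"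
  assumes inn: "\<forall>i<r. is_inner n (ms i) (\<Theta>s i)"
    and h: "h \<in> lin_span (\<Union>i<r. range_mult n (ms i) (\<Theta>s i))"
  shows "AE t in lborel. t \<in> II \<longrightarrow> (\<lambda>a. h a t) \<in>
           CV.span ((\<lambda>(i,j). col n (\<Theta>s i) j t) ` Sigma {..<r} (\<lambda>i. {..<ms i}))"
    and "vec_L2 n h"
proof -
  have "\<exists>(N::nat) (c::nat \<Rightarrow> complex) v. (\<forall>k<N. v k \<in> (\<Union>i<r. range_mult n (ms i) (\<Theta>s i))) \<and> h = (\<lambda>a t. \<Sum>k<N. c k * v k a t)"
    using h unfolding lin_span_def mem_Collect_eq .
  then obtain N :: nat and c :: "nat \<Rightarrow> complex" and v where vv: "(\<forall>k<N. v k \<in> (\<Union>i<r. range_mult n (ms i) (\<Theta>s i))) \<and> h = (\<lambda>a t. \<Sum>k<N. c k * v k a t)"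
    by (elim exE) (erule that)
  have v: "\<forall>k<N. v k \<in> (\<Union>i<r. range_mult n (ms i) (\<Theta>s i))" using vv by (rule conjunct1)
  have hv: "h = (\<lambda>a t. \<Sum>k<N. c k * v k a t)" using vv by (rule conjunct2)
  let ?B = "\<lambda>t. (\<lambda>(i,j). col n (\<Theta>s i) j t) ` Sigma {..<r} (\<lambda>i. {..<ms i})"
  have "AE t in lborel. t \<in> II \<longrightarrow> (\<lambda>a. v k a t) \<in> CV.span (?B t)" if k: "k < N" for k
  proof -
    obtain i where i: "i < r" "v k \<in> range_mult n (ms i) (\<Theta>s i)" using v k by auto
    from range_span[OF _ i(2)] inn i(1)
    have "AE t in lborel. t \<in> II \<longrightarrow> (\<lambda>a. v k a t) \<in> CV.span ((\<lambda>j. col n (\<Theta>s i) j t) ` {..<ms i})"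
      by auto
    thus ?thesis
    proof eventually_elim
      case (elim t)
      have "(\<lambda>j. col n (\<Theta>s i) j t) ` {..<ms i} \<subseteq> ?B t" using i(1) by force
      thus ?case using elim CV.span_mono by blast
    qed
  qed
  hence "AE t in lborel. \<forall>k\<in>{..<N}. t \<in> II \<longrightarrow> (\<lambda>a. v k a t) \<in> CV.span (?B t)"
    by (intro AE_finite_allI) auto
  thus "AE t in lborel. t \<in> II \<longrightarrow> (\<lambda>a. h a t) \<in> CV.span (?B t)"
  proof eventually_elim
    case (elim t)
    show ?case
    proof
      assume t: "t \<in> II"
      have "(\<lambda>a. h a t) = (\<Sum>k<N. cscale (c k) (\<lambda>a. v k a t))"
        by (simp add: hv fun_eq_iff cscale_sum_apply)
      also have "\<dots> \<in> CV.span (?B t)"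
        using elim t by (intro CV.span_sum CV.span_scale) auto
      finally show "(\<lambda>a. h a t) \<in> CV.span (?B t)" .
    qed
  qed
  have vL: "vec_L2 n (v k)" if "k < N" for k
    using v that unfolding range_mult_def by auto
  show "vec_L2 n h"
    unfolding vec_L2_def
  proof (intro conjI allI impI)
    fix a assume a: "a < n"
    show "is_L2 (h a)" unfolding hv
      by (intro L2_sum ballI L2_scale) (use vL a in \<open>auto simp: vec_L2_def\<close>)
  next
    fix a assume a: "a \<ge> n"
    show "h a = (\<lambda>_. 0)" unfolding hv using vL a by (auto simp: vec_L2_def)
  qed
qed

lemma lower_bound:
  fixes r :: nat and ms :: "nat \<Rightarrow> nat"
  assumes inn: "\<forall>i<r. is_inner n (ms i) (\<Theta>s i)"
    and inn0: "is_inner n l \<Theta>"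
    and eq: "l2_closure n (lin_span (\<Union>i<r. range_mult n (ms i) (\<Theta>s i))) = range_mult n l \<Theta>"
    and i: "i < r"
  shows "ms i \<le> l"
proof -
  let ?m = "ms i"
  have inS: "colF n (\<Theta>s i) j \<in> range_mult n l \<Theta>" if j: "j < ?m" for j
  proof -
    have R: "colF n (\<Theta>s i) j \<in> range_mult n ?m (\<Theta>s i)"
      using colF_range inn i j by blast
    have "colF n (\<Theta>s i) j \<in> lin_span (\<Union>i<r. range_mult n (ms i) (\<Theta>s i))"
      unfolding lin_span_def
      by (rule CollectI, rule exI[of _ 1], rule exI[of _ "\<lambda>_. 1"], rule exI[of _ "\<lambda>_. colF n (\<Theta>s i) j"])
         (use R i in auto)
    moreover have "vec_L2 n (colF n (\<Theta>s i) j)" using R unfolding range_mult_def by auto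
    ultimately have "colF n (\<Theta>s i) j \<in> l2_closure n (lin_span (\<Union>i<r. range_mult n (ms i) (\<Theta>s i)))"
      unfolding l2_closure_def by (auto intro!: bexI[of _ "colF n (\<Theta>s i) j"] simp: l2dist_self)
    thus ?thesis using eq by simp
  qed
  have "AE t in lborel. t \<in> II \<longrightarrow> col n (\<Theta>s i) j t \<in> CV.span ((\<lambda>j. col n \<Theta> j t) ` {..<l})"
    if j: "j < ?m" for j
    using range_span[OF inn0 inS[OF j]] by (simp add: colF_def col_def)
  hence A1: "AE t in lborel. \<forall>j\<in>{..<?m}. t \<in> II \<longrightarrow> col n (\<Theta>s i) j t \<in> CV.span ((\<lambda>j. col n \<Theta> j t) ` {..<l})"
    by (intro AE_finite_allI) auto
  have A2: "AE t in lborel. t \<in> II \<longrightarrow>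
        (\<forall>j<?m. \<forall>k<?m. (\<Sum>a<n. cnj (\<Theta>s i a j t) * \<Theta>s i a k t) = (if j = k then 1 else 0))"
    using inn i unfolding is_inner_def by auto
  have "AE t in lborel. t \<in> II \<longrightarrow> ((\<forall>j\<in>{..<?m}. col n (\<Theta>s i) j t \<in> CV.span ((\<lambda>j. col n \<Theta> j t) ` {..<l})) \<and>
        (\<forall>j<?m. \<forall>k<?m. (\<Sum>a<n. cnj (\<Theta>s i a j t) * \<Theta>s i a k t) = (if j = k then 1 else 0)))"
    using A1 A2 by eventually_elim auto
  from exists_good[OF this, of "\<lambda>_. 0" 1]
  obtain t where t: "t \<in> II" "\<forall>j\<in>{..<?m}. col n (\<Theta>s i) j t \<in> CV.span ((\<lambda>j. col n \<Theta> j t) ` {..<l})"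
    "\<forall>j<?m. \<forall>k<?m. (\<Sum>a<n. cnj (\<Theta>s i a j t) * \<Theta>s i a k t) = (if j = k then 1 else 0)"
    by (auto simp: set_integrable_def)
  have "?m \<le> card ((\<lambda>j. col n \<Theta> j t) ` {..<l})"
  proof (rule LA_bound[where u = "\<lambda>j. col n (\<Theta>s i) j t" and h = "\<lambda>j. col n (\<Theta>s i) j t" and n = n and \<eta> = 0])
    show "\<forall>j<?m. \<forall>k<?m. (\<Sum>a<n. cnj (col n (\<Theta>s i) j t a) * col n (\<Theta>s i) k t a) = (if j = k then 1 else 0)"
      using t(3) by (simp add: col_def)
  qed (use t in auto)
  also have "\<dots> \<le> l" using card_image_le by fastforce
  finally show ?thesis .
qed

lemma upper_bound:
  fixes r :: nat and ms :: "nat \<Rightarrow> nat"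
  assumes inn: "\<forall>i<r. is_inner n (ms i) (\<Theta>s i)"
    and inn0: "is_inner n l \<Theta>"
    and eq: "l2_closure n (lin_span (\<Union>i<r. range_mult n (ms i) (\<Theta>s i))) = range_mult n l \<Theta>"
  shows "l \<le> (\<Sum>i<r. ms i)"
proof (cases "l = 0")
  case True
  then show ?thesis by simp
next
  case False
  define \<eta> where "\<eta> = 1 / (2 * (real l * real n + 1))"
  have ln0: "0 \<le> real l * real n" by simp
  have "0 < real l * real n + 1" by (rule add_nonneg_pos[OF ln0]) simp
  hence \<eta>0: "\<eta> > 0" unfolding \<eta>_def by simp
  have small: "real l * real n * \<eta> < 1"
  proof -
    have "real l * real n * \<eta> = (real l * real n) / (2 * (real l * real n + 1))"
      unfolding \<eta>_def by simp
    also have "\<dots> < 1"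
    proof -
      have "x / (2 * (x + 1)) < 1" if "x \<ge> 0" for x :: real
        using that by (simp add: divide_less_eq)
      thus ?thesis using ln0 by blast
    qed
    finally show ?thesis .
  qed
  define \<epsilon> where "\<epsilon> = \<eta> / (real l + 1)"
  have \<epsilon>0: "\<epsilon> > 0" unfolding \<epsilon>_def using \<eta>0 by simp
  let ?Sp = "lin_span (\<Union>i<r. range_mult n (ms i) (\<Theta>s i))"
  let ?B = "\<lambda>t. (\<lambda>(i,j). col n (\<Theta>s i) j t) ` Sigma {..<r} (\<lambda>i. {..<ms i})"
  have gR: "colF n \<Theta> k \<in> range_mult n l \<Theta>" if "k < l" for k
    using colF_range[OF inn0 that] .
  have "\<forall>k. \<exists>h. k < l \<longrightarrow> h \<in> ?Sp \<and> l2dist n (colF n \<Theta> k) h < \<epsilon>"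
  proof
    fix k
    show "\<exists>h. k < l \<longrightarrow> h \<in> ?Sp \<and> l2dist n (colF n \<Theta> k) h < \<epsilon>"
    proof (cases "k < l")
      case True
      hence "colF n \<Theta> k \<in> l2_closure n ?Sp" using gR eq by simp
      then obtain h where "h \<in> ?Sp" "l2dist n (colF n \<Theta> k) h < \<epsilon>"
        unfolding l2_closure_def using \<epsilon>0 by blast
      thus ?thesis by blast
    qed simp
  qed
  then obtain hh where hh: "\<forall>k. k < l \<longrightarrow> hh k \<in> ?Sp \<and> l2dist n (colF n \<Theta> k) (hh k) < \<epsilon>"
    by (metis choice)
  have hL2: "vec_L2 n (hh k)" if "k < l" for k
    using span_AE(2)[OF inn] hh that by blast
  have gL2: "vec_L2 n (colF n \<Theta> k)" if "k < l" for k
    using gR[OF that] unfolding range_mult_def by blast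
  have dL2: "is_L2 (\<lambda>t. colF n \<Theta> k a t - hh k a t)" if "k < l" "a < n" for k a
    using L2_diff gL2[OF that(1)] hL2[OF that(1)] that(2) unfolding vec_L2_def by blast
  define S where "S t = (\<Sum>k<l. \<Sum>a<n. (cmod (colF n \<Theta> k a t - hh k a t))^2)" for t
  have inner: "set_integrable lborel II (\<lambda>t. \<Sum>a<n. (cmod (colF n \<Theta> k a t - hh k a t))^2) \<and>
      (LINT t:II|lborel. (\<Sum>a<n. (cmod (colF n \<Theta> k a t - hh k a t))^2)) =
      (\<Sum>a<n. LINT t:II|lborel. (cmod (colF n \<Theta> k a t - hh k a t))^2)" if "k < l" for k
    by (rule set_integral_sum') (use L2_int[OF dL2] that in auto)
  have outer: "set_integrable lborel II S \<and>
      (LINT t:II|lborel. S t) = (\<Sum>k<l. LINT t:II|lborel. (\<Sum>a<n. (cmod (colF n \<Theta> k a t - hh k a t))^2))"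
    unfolding S_def by (rule set_integral_sum') (use inner in auto)
  have perk: "(\<Sum>a<n. LINT t:II|lborel. (cmod (colF n \<Theta> k a t - hh k a t))^2) < \<epsilon>^2" if "k < l" for k
  proof -
    define X where "X = (\<Sum>a<n. LINT t:II|lborel. (cmod (colF n \<Theta> k a t - hh k a t))^2)"
    have X0: "X \<ge> 0" unfolding X_def
      by (intro sum_nonneg) (auto simp: set_lebesgue_integral_def indicator_def intro!: integral_nonneg_AE)
    have "sqrt X < \<epsilon>" using hh that unfolding X_def l2dist_def by auto
    hence "(sqrt X)^2 < \<epsilon>^2" by (intro power_strict_mono) (use X0 in auto)
    thus ?thesis using X0 unfolding X_def by simp
  qed
  have eqS: "(LINT t:II|lborel. S t) = (\<Sum>k<l. \<Sum>a<n. LINT t:II|lborel. (cmod (colF n \<Theta> k a t - hh k a t))^2)"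
    using outer inner by simp
  have "(\<Sum>k<l. \<Sum>a<n. LINT t:II|lborel. (cmod (colF n \<Theta> k a t - hh k a t))^2) < (\<Sum>k<l. \<epsilon>^2)"
    by (rule sum_strict_mono) (use perk False in auto)
  hence "(LINT t:II|lborel. S t) < (\<Sum>k<l. \<epsilon>^2)" using eqS by simp
  also have "\<dots> = real l * \<epsilon>^2" by simp
  also have "\<dots> \<le> \<eta>^2"
  proof -
    have "real l * \<epsilon>^2 = \<eta>^2 * (real l / (real l + 1)^2)"
      unfolding \<epsilon>_def by (simp add: power_divide)
    also have "\<dots> \<le> \<eta>^2 * 1"
    proof (rule mult_left_mono)
      have "real l \<le> (real l + 1)^2" by (simp add: power2_eq_square algebra_simps)
      thus "real l / (real l + 1)^2 \<le> 1" by (simp add: divide_le_eq)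
    qed simp
    finally show ?thesis by simp
  qed
  also have "\<dots> < 2 * pi * \<eta>^2" using \<eta>0 pi_gt3 by simp
  finally have Slt: "(LINT t:II|lborel. S t) < 2 * pi * \<eta>^2" .
  have Q1: "AE t in lborel. t \<in> II \<longrightarrow>
        (\<forall>j<l. \<forall>k<l. (\<Sum>a<n. cnj (\<Theta> a j t) * \<Theta> a k t) = (if j = k then 1 else 0))"
    using inn0 unfolding is_inner_def by auto
  have "AE t in lborel. \<forall>k\<in>{..<l}. t \<in> II \<longrightarrow> (\<lambda>a. hh k a t) \<in> CV.span (?B t)"
    by (intro AE_finite_allI) (use span_AE(1)[OF inn] hh in auto)
  with Q1 have Q: "AE t in lborel. t \<in> II \<longrightarrow>
        ((\<forall>j<l. \<forall>k<l. (\<Sum>a<n. cnj (\<Theta> a j t) * \<Theta> a k t) = (if j = k then 1 else 0)) \<and>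
         (\<forall>k\<in>{..<l}. (\<lambda>a. hh k a t) \<in> CV.span (?B t)))"
    by eventually_elim auto
  obtain t where t: "t \<in> II" "\<forall>j<l. \<forall>k<l. (\<Sum>a<n. cnj (\<Theta> a j t) * \<Theta> a k t) = (if j = k then 1 else 0)"
      "\<forall>k\<in>{..<l}. (\<lambda>a. hh k a t) \<in> CV.span (?B t)" and St: "S t < \<eta>^2"
    using exists_good[OF Q conjunct1[OF outer] Slt] by blast
  have close: "cmod (col n \<Theta> k t a - hh k a t) \<le> \<eta>" if "k < l" "a < n" for k a
  proof -
    have "(cmod (colF n \<Theta> k a t - hh k a t))^2 \<le> (\<Sum>a<n. (cmod (colF n \<Theta> k a t - hh k a t))^2)"
      using that by (intro member_le_sum) auto
    also have "\<dots> \<le> S t" unfolding S_def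
      using that by (intro member_le_sum) (auto intro: sum_nonneg)
    finally have "(cmod (colF n \<Theta> k a t - hh k a t))^2 < \<eta>^2" using St by simp
    hence "cmod (colF n \<Theta> k a t - hh k a t) < \<eta>"
      using \<eta>0 by (simp add: power_less_imp_less_base less_imp_le)
    thus ?thesis using that by (simp add: colF_def col_def)
  qed
  have "l \<le> card (?B t)"
  proof (rule LA_bound[where u = "\<lambda>k. col n \<Theta> k t" and h = "\<lambda>k a. hh k a t" and n = n and \<eta> = \<eta>])
    show "\<forall>j<l. \<forall>k<l. (\<Sum>a<n. cnj (col n \<Theta> j t a) * col n \<Theta> k t a) = (if j = k then 1 else 0)"
      using t(2) by (simp add: col_def)
  qed (use t close small in auto)
  also have "\<dots> \<le> card (Sigma {..<r} (\<lambda>i. {..<ms i}))" by (rule card_image_le) auto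
  also have "\<dots> = (\<Sum>i<r. ms i)" by (simp add: card_SigmaI)
  finally show ?thesis .
qed

theorem mainTheorem7:
  fixes r n l :: nat and ms :: "nat \<Rightarrow> nat"
    and \<Theta>s :: "nat \<Rightarrow> nat \<Rightarrow> nat \<Rightarrow> real \<Rightarrow> complex"
    and \<Theta> :: "nat \<Rightarrow> nat \<Rightarrow> real \<Rightarrow> complex"
  assumes "r \<ge> 1"
    and "\<forall>i<r. is_inner n (ms i) (\<Theta>s i)"
    and "is_inner n l \<Theta>"
    and "l2_closure n (lin_span (\<Union>i<r. range_mult n (ms i) (\<Theta>s i))) = range_mult n l \<Theta>"
  shows "Max (ms ` {..<r}) \<le> l \<and> l \<le> (\<Sum>i<r. ms i)"
proof
  have "\<forall>x\<in>ms ` {..<r}. x \<le> l" using lower_bound[OF assms(2-4)] by auto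
  moreover have "ms ` {..<r} \<noteq> {}"
  proof -
    have "0 \<in> {..<r}" using assms(1) by simp
    thus ?thesis by blast
  qed
  ultimately show "Max (ms ` {..<r}) \<le> l" by simp
  show "l \<le> (\<Sum>i<r. ms i)" by (rule upper_bound[OF assms(2-4)])
qed

end
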